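(* Let $G$ be a graph on $n$ vertices with $3\leq n\leq 7$ and let $k$ be an integer with $2\leq k<n$. If $\psi_k(G)=n-k+1$, then $\psi_j(G)=n-j+1$ for all integers $j$ with $k<j\leq n$.
   Context: All graphs are finite, simple and nonempty. For a graph $G$ and a positive integer $k$, a $k$-path vertex cover ($k$-PVC) of $G$ is a set $S$ of vertices such that every path on $k$ vertices in $G$ contains at least one vertex of $S$ (if $G$ has no path on $k$ vertices, the empty set is a $k$-PVC). $\psi_k(G)$ denotes the minimum cardinality of a $k$-PVC of $G$. *)

theory Defs
  imports Main
begin

definition simple_graph :: "'a set \<Rightarrow> ('a \<Rightarrow> 'a \<Rightarrow> bool) \<Rightarrow> bool" where
  "simple_graph V E \<longleftrightarrow> finite V \<and> V \<noteq> {} \<and>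
     (\<forall>u v. E u v \<longrightarrow> u \<in> V \<and> v \<in> V) \<and>
     (\<forall>u v. E u v \<longrightarrow> E v u) \<and> (\<forall>v. \<not> E v v)"

definition is_path :: "'a set \<Rightarrow> ('a \<Rightarrow> 'a \<Rightarrow> bool) \<Rightarrow> 'a list \<Rightarrow> bool" where
  "is_path V E p \<longleftrightarrow> distinct p \<and> set p \<subseteq> V \<and>
     (\<forall>i. Suc i < length p \<longrightarrow> E (p ! i) (p ! Suc i))"

definition is_kpvc :: "'a set \<Rightarrow> ('a \<Rightarrow> 'a \<Rightarrow> bool) \<Rightarrow> nat \<Rightarrow> 'a set \<Rightarrow> bool" where
  "is_kpvc V E k S \<longleftrightarrow> S \<subseteq> V \<and>
     (\<forall>p. is_path V E p \<and> length p = k \<longrightarrow> set p \<inter> S \<noteq> {})"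

definition psi :: "'a set \<Rightarrow> ('a \<Rightarrow> 'a \<Rightarrow> bool) \<Rightarrow> nat \<Rightarrow> nat" where
  "psi V E k = Min (card ` {S. is_kpvc V E k S})"

end

theory Submission
  imports Defs
begin

lemma is_path_succ: "is_path V E p \<longleftrightarrow> distinct p \<and> set p \<subseteq> V \<and> successively E p"
  unfolding is_path_def successively_conv_nth by blast

lemma path_cons:
  assumes "is_path V E Q" "u \<in> V" "u \<notin> set Q" "Q \<noteq> []" "E u (Q!0)"
  shows "\<exists>p. is_path V E p \<and> set p = insert u (set Q)"
proof -
  have "is_path V E (u # Q)" using assms unfolding is_path_succ
    by (auto simp: successively_Cons hd_conv_nth)
  then show ?thesis by force
qed

lemma path_snoc:
  assumes "is_path V E Q" "u \<in> V" "u \<notin> set Q" "Q \<noteq> []" "E (Q!(length Q - 1)) u"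
  shows "\<exists>p. is_path V E p \<and> set p = insert u (set Q)"
proof -
  have "is_path V E (Q @ [u])" using assms unfolding is_path_succ
    by (auto simp: successively_append_iff last_conv_nth)
  then show ?thesis by force
qed

lemma path_ins:
  assumes "is_path V E Q" "u \<in> V" "u \<notin> set Q" "Suc i < length Q"
    "E (Q!i) u" "E u (Q!Suc i)"
  shows "\<exists>p. is_path V E p \<and> set p = insert u (set Q)"
proof -
  let ?A = "take (Suc i) Q" and ?B = "drop (Suc i) Q"
  have Q: "Q = ?A @ ?B" by simp
  have lA: "last ?A = Q!i" using assms(4)
    by (metis Suc_lessD last_snoc take_Suc_conv_app_nth)
  have hB: "hd ?B = Q!Suc i" using assms(4) by (simp add: hd_drop_conv_nth)
  have d: "distinct Q" "set Q \<subseteq> V" "successively E Q" using assms(1) unfolding is_path_succ by auto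
  have sA: "successively E ?A" and sB: "successively E ?B"
    using d(3) Q successively_append_iff by metis+
  have ne: "?A \<noteq> []" "?B \<noteq> []" using assms(4) by auto
  have "successively E (?A @ u # ?B)"
    using sA sB ne lA hB assms(5,6)
    by (auto simp: successively_append_iff successively_Cons)
  moreover have "distinct (?A @ u # ?B)"
  proof -
    have "u \<notin> set ?A" "u \<notin> set ?B" using assms(3) by (auto dest: in_set_takeD in_set_dropD)
    moreover have "distinct ?A \<and> distinct ?B \<and> set ?A \<inter> set ?B = {}"
      using d(1) distinct_append[of ?A ?B] by (metis append_take_drop_id)
    ultimately show ?thesis by (simp only: distinct_append distinct.simps set_simps) blast
  qed
  moreover have "set (?A @ u # ?B) = insert u (set Q)"
    using Q by (metis Un_insert_right list.simps(15) set_append)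
  ultimately show ?thesis using d(2) assms(2) unfolding is_path_succ by (metis insert_subset)
qed

lemma three_pos: "(1::nat) \<le> i1 \<Longrightarrow> i1 + 2 \<le> k \<Longrightarrow> 1 \<le> i2 \<Longrightarrow> i2 + 2 \<le> k \<Longrightarrow> 1 \<le> i3 \<Longrightarrow> i3 + 2 \<le> k \<Longrightarrow> k \<le> 6 \<Longrightarrow>
  i1 \<noteq> i2 \<Longrightarrow> i1 \<noteq> i3 \<Longrightarrow> i2 \<noteq> i3 \<Longrightarrow> i2 \<noteq> Suc i1 \<Longrightarrow> i1 \<noteq> Suc i2 \<Longrightarrow> i3 \<noteq> Suc i1 \<Longrightarrow> i1 \<noteq> Suc i3 \<Longrightarrow> i3 \<noteq> Suc i2 \<Longrightarrow> i2 \<noteq> Suc i3 \<Longrightarrow> False"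
  by presburger

lemma deg_bound:
  assumes g: "simple_graph V E" and W: "W \<subseteq> V" "card W = Suc k" and k: "2 \<le> k" "k \<le> 6"
    and tr: "\<forall>T\<subseteq>V. card T = k \<longrightarrow> (\<exists>p. is_path V E p \<and> set p = T)"
    and nt: "\<not> (\<exists>p. is_path V E p \<and> set p = W)"
    and u: "u \<in> W" and abc: "a \<in> W" "b \<in> W" "c \<in> W" "a \<noteq> b" "a \<noteq> c" "b \<noteq> c"
    and e: "E u a" "E u b" "E u c"
  shows False
proof -
  have fin: "finite W" using W(2) by (metis card.infinite nat.distinct(1))
  have sym: "\<And>x y. E x y \<Longrightarrow> E y x" and irr: "\<And>x. \<not> E x x" using g unfolding simple_graph_def by auto
  have "card (W - {u}) = k" using W(2) u fin by simp
  moreover have "W - {u} \<subseteq> V" using W(1) by blast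
  ultimately obtain Q where Q: "is_path V E Q" "set Q = W - {u}" using tr by blast
  have dQ: "distinct Q" using Q unfolding is_path_def by auto
  have lQ: "length Q = k" using distinct_card[OF dQ] Q(2) \<open>card (W - {u}) = k\<close> by simp
  have uV: "u \<in> V" "u \<notin> set Q" using u W Q by auto
  have ins: "insert u (set Q) = W" using Q u by auto
  have pos: "\<exists>i. 1 \<le> i \<and> i + 2 \<le> k \<and> Q!i = x" if "x \<in> W" "E u x" for x
  proof -
    have "x \<noteq> u" using irr that by auto
    then have "x \<in> set Q" using Q that by auto
    then obtain i where i: "i < length Q" "Q!i = x" by (auto simp: in_set_conv_nth)
    have Qne: "Q \<noteq> []" using lQ k by auto
    have "i \<noteq> 0"
    proof
      assume "i = 0"
      then have "E u (Q!0)" using i that by simp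
      then show False using path_cons[OF Q(1) uV Qne] nt ins by simp
    qed
    moreover have "i \<noteq> k - 1"
    proof
      assume "i = k - 1"
      then have "E (Q!(length Q - 1)) u" using i that sym lQ by simp
      then show False using path_snoc[OF Q(1) uV Qne] nt ins by simp
    qed
    ultimately show ?thesis using i lQ by (intro exI[of _ i]) auto
  qed
  have nc: False if "Q!i = x" "Q!Suc i = y" "E u x" "E u y" "Suc i < k" for i x y
  proof -
    have "E (Q!i) u" "E u (Q!Suc i)" using that sym by auto
    then show False using path_ins[OF Q(1) uV, of i] that(5) lQ nt ins by simp
  qed
  obtain i1 where i1: "1 \<le> i1" "i1 + 2 \<le> k" "Q!i1 = a" using pos[OF abc(1) e(1)] by blast
  obtain i2 where i2: "1 \<le> i2" "i2 + 2 \<le> k" "Q!i2 = b" using pos[OF abc(2) e(2)] by blast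
  obtain i3 where i3: "1 \<le> i3" "i3 + 2 \<le> k" "Q!i3 = c" using pos[OF abc(3) e(3)] by blast
  have "i1 \<noteq> i2" "i1 \<noteq> i3" "i2 \<noteq> i3" using i1 i2 i3 abc by auto
  moreover have "i2 \<noteq> Suc i1"
  proof
    assume h: "i2 = Suc i1"
    have "Suc i1 < k" using h i2(2) by simp
    then show False using nc[of i1 a b] i1(3) i2(3) h e by simp
  qed
  moreover have "i1 \<noteq> Suc i2"
  proof
    assume h: "i1 = Suc i2"
    have "Suc i2 < k" using h i1(2) by simp
    then show False using nc[of i2 b a] i2(3) i1(3) h e by simp
  qed
  moreover have "i3 \<noteq> Suc i1"
  proof
    assume h: "i3 = Suc i1"
    have "Suc i1 < k" using h i3(2) by simp
    then show False using nc[of i1 a c] i1(3) i3(3) h e by simp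
  qed
  moreover have "i1 \<noteq> Suc i3"
  proof
    assume h: "i1 = Suc i3"
    have "Suc i3 < k" using h i1(2) by simp
    then show False using nc[of i3 c a] i3(3) i1(3) h e by simp
  qed
  moreover have "i3 \<noteq> Suc i2"
  proof
    assume h: "i3 = Suc i2"
    have "Suc i2 < k" using h i3(2) by simp
    then show False using nc[of i2 b c] i2(3) i3(3) h e by simp
  qed
  moreover have "i2 \<noteq> Suc i3"
  proof
    assume h: "i2 = Suc i3"
    have "Suc i3 < k" using h i2(2) by simp
    then show False using nc[of i3 c b] i3(3) i2(3) h e by simp
  qed
  ultimately show False using three_pos i1(1,2) i2(1,2) i3(1,2) k(2) by blast
qed

lemma key:
  assumes g: "simple_graph V E" and W: "W \<subseteq> V" "card W = Suc k" and k: "2 \<le> k" "k \<le> 6"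
    and tr: "\<forall>T\<subseteq>V. card T = k \<longrightarrow> (\<exists>p. is_path V E p \<and> set p = T)"
  shows "\<exists>p. is_path V E p \<and> set p = W"
proof (rule ccontr)
  assume nt: "\<not> (\<exists>p. is_path V E p \<and> set p = W)"
  have fin: "finite W" using W(2) by (metis card.infinite nat.distinct(1))
  have sym: "\<And>x y. E x y \<Longrightarrow> E y x" and irr: "\<And>x. \<not> E x x" using g unfolding simple_graph_def by auto
  obtain v where v: "v \<in> W" using W(2) by (metis card.empty ex_in_conv nat.distinct(1))
  have "card (W - {v}) = k" using W(2) v fin by simp
  moreover have "W - {v} \<subseteq> V" using W(1) by blast
  ultimately obtain P where P: "is_path V E P" "set P = W - {v}" using tr by blast
  have dP: "distinct P" "successively E P" using P unfolding is_path_succ by auto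
  have lP: "length P = k" using distinct_card[OF dP(1)] P(2) \<open>card (W - {v}) = k\<close> by simp
  have Pne: "P \<noteq> []" using lP k by auto
  have vV: "v \<in> V" "v \<notin> set P" using v W(1) P(2) by blast+
  have ins: "insert v (set P) = W" using P(2) v by blast
  define w0 where "w0 = P!0"
  have "w0 \<in> set P" unfolding w0_def using Pne by (cases P) auto
  then have w0: "w0 \<in> W" "w0 \<noteq> v" using P(2) by blast+
  have "card (W - {w0}) = k" using W(2) w0 fin by simp
  moreover have "W - {w0} \<subseteq> V" using W(1) by blast
  ultimately obtain R where R: "is_path V E R" "set R = W - {w0}" using tr by blast
  have dR: "distinct R" "successively E R" using R unfolding is_path_succ by auto
  have lR: "length R = k" using distinct_card[OF dR(1)] R(2) \<open>card (W - {w0}) = k\<close> by simp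
  have "v \<in> set R" using R v w0 by auto
  then obtain i where i: "i < k" "R!i = v" using lR by (auto simp: in_set_conv_nth)
  obtain x where x: "x \<in> W" "E v x"
  proof (cases "Suc i < k")
    case True
    then have "E (R!i) (R!Suc i)" using successively_nth[OF dR(2)] lR by auto
    moreover have "R!Suc i \<in> W" using R True lR by (metis DiffD1 nth_mem)
    ultimately show ?thesis using that i by auto
  next
    case False
    then obtain i' where i': "i = Suc i'" using i k by (cases i) auto
    then have "E (R!i') (R!i)" using successively_nth[OF dR(2), of i'] lR i by simp
    moreover have "R!i' \<in> W" using R i lR i' by (metis DiffD1 nth_mem Suc_lessD)
    ultimately show ?thesis using that i sym by auto
  qed
  have "x \<noteq> v" using x irr by auto
  then have "x \<in> set P" using P x by auto
  then obtain j where j: "j < k" "P!j = x" using lP by (auto simp: in_set_conv_nth)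
  have j0: "j \<noteq> 0"
  proof
    assume "j = 0"
    then have "E v (P!0)" using j x by simp
    then show False using path_cons[OF P(1) vV Pne] nt ins by simp
  qed
  have j1: "Suc j < k"
  proof (rule ccontr)
    assume "\<not> Suc j < k"
    then have "j = length P - 1" using j lP by auto
    then have "E (P!(length P - 1)) v" using j x sym by simp
    then show False using path_snoc[OF P(1) vV Pne] nt ins by simp
  qed
  obtain j' where jj: "j = Suc j'" using j0 by (cases j) auto
  have "E (P!j') (P!j)" using successively_nth[OF dP(2), of j'] jj j lP by simp
  then have e1: "E x (P!(j-1))" using jj j sym by simp
  have e2: "E x (P!Suc j)" using successively_nth[OF dP(2), of j] j j1 lP by simp
  have ms: "P!(j-1) \<in> set P" "P!Suc j \<in> set P" using j j1 lP by (simp_all add: nth_mem)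
  have m1: "P!(j-1) \<in> W" "P!Suc j \<in> W" using ms P(2) by blast+
  have ne: "P!(j-1) \<noteq> P!Suc j" using dP(1) j1 lP by (simp add: nth_eq_iff_index_eq)
  have ne2: "P!(j-1) \<noteq> v" "P!Suc j \<noteq> v" using vV(2) ms by blast+
  show False
    using deg_bound[OF g W k tr nt x(1) m1 v ne ne2 e1 e2] x sym by auto
qed

lemma kpvc_fin: "simple_graph V E \<Longrightarrow> finite {S. is_kpvc V E j S}"
proof -
  assume g: "simple_graph V E"
  have "{S. is_kpvc V E j S} \<subseteq> Pow V" unfolding is_kpvc_def by auto
  moreover have "finite V" using g unfolding simple_graph_def by simp
  ultimately show ?thesis using finite_subset by blast
qed

lemma psi_upper:
  assumes g: "simple_graph V E" and n: "card V = n" and j: "1 \<le> j" "j \<le> n"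
  shows "psi V E j \<le> n - j + 1"
proof -
  have fV: "finite V" using g unfolding simple_graph_def by auto
  have le: "n - j + 1 \<le> card V" using n j by simp
  obtain S where S: "S \<subseteq> V" "card S = n - j + 1" using obtain_subset_with_card_n[OF le] by metis
  have "is_kpvc V E j S"
    unfolding is_kpvc_def
  proof (intro conjI allI impI)
    fix p assume p: "is_path V E p \<and> length p = j"
    then have ps: "set p \<subseteq> V" "card (set p) = j" using distinct_card unfolding is_path_def by auto
    show "set p \<inter> S \<noteq> {}"
    proof
      assume "set p \<inter> S = {}"
      then have "card (set p \<union> S) = j + (n - j + 1)" using ps S fV
        by (simp add: card_Un_disjoint finite_subset)
      moreover have "card (set p \<union> S) \<le> n" using ps S n card_mono[OF fV, of "set p \<union> S"] by auto
      ultimately show False using j by simp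
    qed
  qed (use S in auto)
  then have "card S \<in> card ` {S. is_kpvc V E j S}" by blast
  then show ?thesis unfolding psi_def using kpvc_fin[OF g] S Min_le[of "card ` {S. is_kpvc V E j S}"] by simp
qed

lemma psi_iff:
  assumes g: "simple_graph V E" and n: "card V = n" and j: "1 \<le> j" "j \<le> n"
  shows "psi V E j = n - j + 1 \<longleftrightarrow> (\<forall>T\<subseteq>V. card T = j \<longrightarrow> (\<exists>p. is_path V E p \<and> set p = T))"
proof
  have fV: "finite V" using g unfolding simple_graph_def by auto
  assume h: "psi V E j = n - j + 1"
  show "\<forall>T\<subseteq>V. card T = j \<longrightarrow> (\<exists>p. is_path V E p \<and> set p = T)"
  proof (intro allI impI)
    fix T assume T: "T \<subseteq> V" "card T = j"
    have cS: "card (V - T) = n - j" using T n fV by (simp add: card_Diff_subset finite_subset)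
    have "\<not> is_kpvc V E j (V - T)"
    proof
      assume "is_kpvc V E j (V - T)"
      then have "card (V - T) \<in> card ` {S. is_kpvc V E j S}" by blast
      then have "psi V E j \<le> n - j" unfolding psi_def using kpvc_fin[OF g] cS by (metis Min_le finite_imageI)
      then show False using h by simp
    qed
    then obtain p where p: "is_path V E p" "length p = j" "set p \<inter> (V - T) = {}"
      unfolding is_kpvc_def by auto
    have "set p \<subseteq> T" using p unfolding is_path_def by auto
    moreover have "card (set p) = j" using p distinct_card unfolding is_path_def by auto
    ultimately have "set p = T" using T fV by (metis card_subset_eq finite_subset)
    then show "\<exists>p. is_path V E p \<and> set p = T" using p by auto
  qed
next
  have fV: "finite V" using g unfolding simple_graph_def by auto
  assume tr: "\<forall>T\<subseteq>V. card T = j \<longrightarrow> (\<exists>p. is_path V E p \<and> set p = T)"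
  have lb: "n - j + 1 \<le> card S" if S: "is_kpvc V E j S" for S
  proof (rule ccontr)
    assume "\<not> n - j + 1 \<le> card S"
    have SV: "S \<subseteq> V" using S unfolding is_kpvc_def by auto
    have "card (V - S) \<ge> j" using SV n fV j \<open>\<not> n - j + 1 \<le> card S\<close>
      by (simp add: card_Diff_subset finite_subset)
    then obtain T where T: "T \<subseteq> V - S" "card T = j" using obtain_subset_with_card_n by metis
    then obtain p where p: "is_path V E p" "set p = T" using tr by auto
    have "length p = j" using p T distinct_card unfolding is_path_def by metis
    then have "set p \<inter> S \<noteq> {}" using S p unfolding is_kpvc_def by auto
    then show False using p T by auto
  qed
  have ne: "{S. is_kpvc V E j S} \<noteq> {}"
  proof -
    have "is_kpvc V E j V" unfolding is_kpvc_def
    proof (intro conjI allI impI)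
      fix p assume "is_path V E p \<and> length p = j"
      then show "set p \<inter> V \<noteq> {}" using j unfolding is_path_def by (cases p) auto
    qed simp
    then show ?thesis by auto
  qed
  have "n - j + 1 \<le> psi V E j" unfolding psi_def using kpvc_fin[OF g] ne lb by (auto simp: Min_ge_iff)
  then show "psi V E j = n - j + 1" using psi_upper[OF g n j] by simp
qed

theorem mainTheorem14:
  fixes V :: "'a set" and E :: "'a \<Rightarrow> 'a \<Rightarrow> bool" and n k :: nat
  assumes "simple_graph V E"
    and "card V = n" and "3 \<le> n" and "n \<le> 7"
    and "2 \<le> k" and "k < n"
    and "psi V E k = n - k + 1"
  shows "\<forall>j. k < j \<and> j \<le> n \<longrightarrow> psi V E j = n - j + 1"
proof -
  note g = assms(1) and nV = assms(2)
  have base: "\<forall>T\<subseteq>V. card T = k \<longrightarrow> (\<exists>p. is_path V E p \<and> set p = T)"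
    using psi_iff[OF g nV, of k] assms by auto
  have step: "k + d \<le> n \<Longrightarrow> (\<forall>T\<subseteq>V. card T = k + d \<longrightarrow> (\<exists>p. is_path V E p \<and> set p = T))" for d
  proof (induction d)
    case 0 then show ?case using base by simp
  next
    case (Suc d)
    then have ih: "\<forall>T\<subseteq>V. card T = k + d \<longrightarrow> (\<exists>p. is_path V E p \<and> set p = T)" by simp
    show ?case
    proof (intro allI impI)
      fix T assume "T \<subseteq> V" "card T = k + Suc d"
      then show "\<exists>p. is_path V E p \<and> set p = T"
        using key[OF g, of T "k + d"] ih Suc.prems assms by auto
    qed
  qed
  show ?thesis
  proof (intro allI impI)
    fix j assume j: "k < j \<and> j \<le> n"
    then have "\<forall>T\<subseteq>V. card T = j \<longrightarrow> (\<exists>p. is_path V E p \<and> set p = T)"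
      using step[of "j - k"] by simp
    then show "psi V E j = n - j + 1" using psi_iff[OF g nV, of j] j by simp
  qed
qed

end
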